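(* Let $e_n$ and $m_n$ be the numbers of Dyck excursions with catastrophes and Dyck meanders with catastrophes of length $n$. Then \[e_n=C_e\rho_0^{-n}\big(1+O(1/n)\big),\qquad m_n=C_m\rho_0^{-n}\big(1+O(1/n)\big),\] where $\rho_0\approx0.46557$ is the unique positive root of $\rho_0^3+2\rho_0^2+\rho_0-1$, $C_e\approx0.10381$ is the positive root of $31C_e^3-62C_e^2+35C_e-3$, and $C_m\approx0.32679$ is the positive root of $31C_m^3-31C_m^2+16C_m-3$.
   Context: Dyck paths with catastrophes: paths starting at altitude $0$, never going below $0$, with steps $+1$, $-1$, and catastrophes (a step from an altitude $h\ge2$ directly to altitude $0$), all with weight $1$; meanders end anywhere, excursions end at $0$; length = number of steps. *)

theory Defs
  imports "HOL-Analysis.Analysis" "HOL-Library.Landau_Symbols"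
begin

datatype step = Up | Down | Cat

fun run :: "nat \<Rightarrow> step list \<Rightarrow> nat option" where
  "run h [] = Some h"
| "run h (Up # s) = run (Suc h) s"
| "run h (Down # s) = (if h \<ge> 1 then run (h - 1) s else None)"
| "run h (Cat # s) = (if h \<ge> 2 then run 0 s else None)"

definition meanders :: "nat \<Rightarrow> step list set" where
  "meanders n = {p. length p = n \<and> run 0 p \<noteq> None}"

definition excursions :: "nat \<Rightarrow> step list set" where
  "excursions n = {p. length p = n \<and> run 0 p = Some 0}"

definition e_num :: "nat \<Rightarrow> nat" where "e_num n = card (excursions n)"
definition m_num :: "nat \<Rightarrow> nat" where "m_num n = card (meanders n)"

end

theory Submission
  imports Defs "HOL-Complex_Analysis.Complex_Analysis"
begin


lemma run_append: "run h (p @ q) = (case run h p of None \<Rightarrow> None | Some h' \<Rightarrow> run h' q)"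
  by (induction h p rule: run.induct) auto

lemma run_le: "run h p = Some t \<Longrightarrow> t \<le> h + length p"
  by (induction h p rule: run.induct) (auto split: if_splits)

definition A :: "nat \<Rightarrow> nat \<Rightarrow> step list set" where
  "A n h = {p. length p = n \<and> run 0 p = Some h}"

lemma UNIV_step: "(UNIV :: step set) = {Up, Down, Cat}"
  using step.exhaust by auto

lemma finite_len: "finite {p :: step list. length p = n}"
proof -
  have "{p :: step list. length p = n} = {p. set p \<subseteq> UNIV \<and> length p = n}" by auto
  moreover have "finite (UNIV :: step set)" by (subst UNIV_step) simp
  ultimately show ?thesis using finite_lists_length_eq[of "UNIV :: step set" n] by simp
qed

lemma finite_A: "finite (A n h)"
proof -
  have "A n h \<subseteq> {p. length p = n}" by (auto simp: A_def)
  then show ?thesis using finite_subset finite_len by blast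
qed

definition P :: "nat \<Rightarrow> nat \<Rightarrow> nat" where "P n h = card (A n h)"

lemma A_Suc: "A (Suc n) h =
   (if h \<ge> 1 then (\<lambda>p. p @ [Up]) ` A n (h - 1) else {}) \<union>
   (\<lambda>p. p @ [Down]) ` A n (h + 1) \<union>
   (if h = 0 then (\<lambda>p. p @ [Cat]) ` (\<Union>j\<in>{2..n}. A n j) else {})"
proof (intro equalityI subsetI)
  fix q assume q: "q \<in> A (Suc n) h"
  then have len: "length q = Suc n" and r: "run 0 q = Some h" by (auto simp: A_def)
  then obtain p s where qs: "q = p @ [s]"
    by (metis length_Suc_conv_rev)
  with len have lp: "length p = n" by simp
  from r qs obtain h' where h': "run 0 p = Some h'" and rs: "run h' [s] = Some h"
    by (auto simp: run_append split: option.splits)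
  from h' run_le have "h' \<le> n" using lp by fastforce
  then show "q \<in> (if h \<ge> 1 then (\<lambda>p. p @ [Up]) ` A n (h - 1) else {}) \<union>
   (\<lambda>p. p @ [Down]) ` A n (h + 1) \<union>
   (if h = 0 then (\<lambda>p. p @ [Cat]) ` (\<Union>j\<in>{2..n}. A n j) else {})"
    using rs h' lp qs by (cases s) (auto simp: A_def split: if_splits)
next
  fix q assume "q \<in> (if h \<ge> 1 then (\<lambda>p. p @ [Up]) ` A n (h - 1) else {}) \<union>
   (\<lambda>p. p @ [Down]) ` A n (h + 1) \<union>
   (if h = 0 then (\<lambda>p. p @ [Cat]) ` (\<Union>j\<in>{2..n}. A n j) else {})"
  then show "q \<in> A (Suc n) h"
    by (auto simp: A_def run_append split: if_splits)
qed

lemma P_Suc: "P (Suc n) h =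
   (if h \<ge> 1 then P n (h - 1) else 0) + P n (h + 1) + (if h = 0 then (\<Sum>j\<in>{2..n}. P n j) else 0)"
proof -
  have inj: "inj_on (\<lambda>p. p @ [s]) X" for s :: step and X by (auto simp: inj_on_def)
  have cU: "card ((\<lambda>p. p @ [Cat]) ` (\<Union>j\<in>{2..n}. A n j)) = (\<Sum>j\<in>{2..n}. P n j)"
    unfolding P_def
    by (subst card_image[OF inj], rule card_UN_disjoint) (use finite_A in \<open>auto simp: A_def\<close>)
  have cU': "card (\<Union>j\<in>{2..n}. A n j) = (\<Sum>j\<in>{2..n}. card (A n j))"
    by (rule card_UN_disjoint) (use finite_A in \<open>auto simp: A_def\<close>)
  have d1: "(\<lambda>p. p @ [Up]) ` X \<inter> (\<lambda>p. p @ [Down]) ` Y = {}" for X Y by auto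
  have d2: "(\<lambda>p. p @ [Up]) ` X \<inter> (\<lambda>p. p @ [Cat]) ` Y = {}" for X Y by auto
  have d3: "(\<lambda>p. p @ [Down]) ` X \<inter> (\<lambda>p. p @ [Cat]) ` Y = {}" for X Y by auto
  show ?thesis
    unfolding P_def A_Suc[of n h]
    apply (subst card_Un_disjoint)
      apply (auto simp: finite_A d1 d2 d3 card_image[OF inj])[3]
    apply (subst card_Un_disjoint)
       apply (auto simp: finite_A d1 d2 d3 card_image[OF inj] cU')
    done
qed

lemma P_0: "P 0 h = (if h = 0 then 1 else 0)"
proof -
  have "A 0 h = (if h = 0 then {[]} else {})" by (auto simp: A_def)
  then show ?thesis by (simp add: P_def)
qed

lemma e_num_P: "e_num n = P n 0"
  by (simp add: e_num_def P_def A_def excursions_def)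

lemma m_num_P: "m_num n = (\<Sum>h\<le>n. P n h)"
proof -
  have "meanders n = (\<Union>h\<le>n. A n h)"
    using run_le by (fastforce simp: meanders_def A_def)
  then show ?thesis unfolding m_num_def P_def
    by (simp, subst card_UN_disjoint) (auto simp: finite_A, auto simp: A_def)
qed



definition yf :: "complex \<Rightarrow> complex" where
  "yf z = 2 * z / (1 + csqrt (1 - 4 * z^2))"

lemma csqrt_plus1_nz: "1 + csqrt w \<noteq> 0"
proof
  assume "1 + csqrt w = 0"
  then have h: "csqrt w = -1" by (metis add.commute add_eq_0_iff)
  have "Re (csqrt w) = -1" by (subst h) simp
  with Re_csqrt[of w] show False by linarith
qed

lemma norm_csqrt_plus1: "norm (1 + csqrt w) \<ge> 1"
proof -
  have "1 \<le> Re (1 + csqrt w)" using Re_csqrt[of w] by simp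
  also have "\<dots> \<le> norm (1 + csqrt w)" by (rule complex_Re_le_cmod)
  finally show ?thesis .
qed

lemma aux: "d \<noteq> 0 \<Longrightarrow> z * (d + x) / d = z * (1 + x / (d::complex))"
  by (simp add: field_simps)

lemma yf_eq: "yf z = z * (1 + yf z ^ 2)"
proof -
  define s where "s = csqrt (1 - 4 * z^2)"
  have s2: "s^2 = 1 - 4 * z^2" unfolding s_def by simp
  have nz: "1 + s \<noteq> 0" unfolding s_def by (rule csqrt_plus1_nz)
  have k: "(1 + s)^2 + 4 * z^2 = 2 * (1 + s)"
    using s2 by (simp add: power2_eq_square algebra_simps)
  have k2: "z * ((1 + s)^2 + 4 * z^2) = (2 * z) * (1 + s)" unfolding k by (simp add: algebra_simps)
  have "2 * z / (1 + s) = (2 * z * (1 + s)) / ((1 + s) * (1 + s))"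
    by (simp only: nonzero_mult_divide_mult_cancel_right[OF nz])
  also have "\<dots> = z * ((1 + s)^2 + 4 * z^2) / (1 + s)^2"
    unfolding k2 by (simp only: power2_eq_square)
  also have "\<dots> = z * (1 + (2 * z / (1 + s))^2)"
    using aux[of "(1 + s)^2" z "4 * z^2"] nz by (simp add: power_divide power_mult_distrib)
  finally show ?thesis unfolding yf_def s_def[symmetric] by simp
qed

lemma yf_0 [simp]: "yf 0 = 0" by (simp add: yf_def)

lemma norm_yf: "norm (yf z) \<le> 2 * norm z"
proof -
  have "norm (yf z) = 2 * norm z / norm (1 + csqrt (1 - 4 * z^2))"
    by (simp add: yf_def norm_divide norm_mult)
  also have "\<dots> \<le> 2 * norm z / 1"
    using norm_csqrt_plus1 csqrt_plus1_nz by (intro divide_left_mono) auto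
  finally show ?thesis by simp
qed

lemma Re_1_4z2: "norm z < 1/2 \<Longrightarrow> Re (1 - 4 * z^2) > 0"
proof -
  assume nz: "norm z < 1/2"
  have "norm (z^2) = norm z ^ 2" by (simp add: norm_power)
  also have "\<dots> < (1/2)^2" using nz by (intro power_strict_mono) auto
  finally have "Re (z^2) < 1/4" using complex_Re_le_cmod[of "z^2"] by (simp add: power2_eq_square)
  then show ?thesis by simp
qed

lemma yf_holo: "yf holomorphic_on ball 0 (1/2)"
proof -
  have np: "1 - 4 * z^2 \<notin> \<real>\<^sub>\<le>\<^sub>0" if "z \<in> ball 0 (1/2)" for z :: complex
    using Re_1_4z2[of z] that by (auto simp: complex_nonpos_Reals_iff)
  have h1: "(\<lambda>z. csqrt (1 - 4 * z^2)) holomorphic_on ball 0 (1/2)"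
    by (rule holomorphic_on_csqrt') (auto intro!: holomorphic_intros np)
  have "(\<lambda>z. 2 * z / (1 + csqrt (1 - 4 * z^2))) holomorphic_on ball 0 (1/2)"
    by (intro holomorphic_on_divide holomorphic_on_add holomorphic_on_mult h1 holomorphic_on_const holomorphic_on_ident csqrt_plus1_nz)
  then show ?thesis unfolding yf_def[abs_def] .
qed


definition Qf :: "complex \<Rightarrow> complex" where "Qf w = 1 - w - w^3"
definition emf :: "complex \<Rightarrow> complex" where "emf z = 1 + yf z ^ 2 / Qf (yf z)"
definition Fh :: "nat \<Rightarrow> complex \<Rightarrow> complex" where "Fh h z = emf z * yf z ^ h"
definition Sf :: "nat \<Rightarrow> complex \<Rightarrow> complex" where "Sf a z = emf z * yf z ^ a / (1 - yf z)"

abbreviation "B4 \<equiv> ball (0::complex) (1/4)"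

lemma norm_yf_B4: "z \<in> B4 \<Longrightarrow> norm (yf z) < 1/2"
  using norm_yf[of z] by auto

lemma Qf_nz: "norm w < 1/2 \<Longrightarrow> Qf w \<noteq> 0"
proof
  assume w: "norm w < 1/2" and q: "Qf w = 0"
  then have "1 = w + w^3" by (simp add: Qf_def algebra_simps)
  then have "1 = norm (w + w^3)" by simp
  also have "\<dots> \<le> norm w + norm w ^ 3" by (metis norm_triangle_ineq norm_power)
  also have "norm w ^ 3 \<le> (1/2)^3" using w by (intro power_mono) auto
  also have "(1/2::real)^3 = 1/8" by (simp add: power3_eq_cube)
  finally show False using w by simp
qed

lemma one_minus_nz: "norm w < 1 \<Longrightarrow> 1 - w \<noteq> (0::complex)"
  by auto

lemma one_plus_sq_nz: "norm w < 1 \<Longrightarrow> 1 + w^2 \<noteq> (0::complex)"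
proof
  assume w: "norm w < 1" and "1 + w^2 = 0"
  then have "w^2 = -1" by (simp add: add_eq_0_iff)
  then have "norm (w^2) = 1" by simp
  moreover have "norm (w^2) < 1" using w by (simp add: norm_power power_less_one_iff)
  ultimately show False by simp
qed

lemma yf_holo_B4: "yf holomorphic_on B4"
  by (rule holomorphic_on_subset[OF yf_holo]) auto

lemma emf_holo: "emf holomorphic_on B4"
proof -
  have "(\<lambda>z. 1 + yf z ^ 2 / Qf (yf z)) holomorphic_on B4"
    unfolding Qf_def
    by (intro holomorphic_on_add holomorphic_on_divide holomorphic_on_power holomorphic_on_diff
          holomorphic_on_const yf_holo_B4)
       (use Qf_nz norm_yf_B4 in \<open>auto simp: Qf_def\<close>)
  then show ?thesis unfolding emf_def[abs_def] .
qed

lemma Fh_holo: "Fh h holomorphic_on B4"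
  unfolding Fh_def[abs_def]
  by (intro holomorphic_on_mult holomorphic_on_power emf_holo yf_holo_B4)

lemma Sf_holo: "Sf a holomorphic_on B4"
  unfolding Sf_def[abs_def]
  by (intro holomorphic_on_mult holomorphic_on_power emf_holo yf_holo_B4 holomorphic_on_divide
       holomorphic_on_diff holomorphic_on_const)
     (use norm_yf_B4 one_minus_nz in fastforce)

lemma hexp: "f holomorphic_on ball 0 r \<Longrightarrow> 0 < r \<Longrightarrow> f has_fps_expansion fps_expansion f 0"
  by (rule has_fps_expansion_fps_expansion[of "ball 0 r"]) auto

lemma fps_eq_from:
  fixes f g :: "complex \<Rightarrow> complex"
  assumes "f has_fps_expansion F" "0 < r" "\<And>z. z \<in> ball 0 r \<Longrightarrow> g z = f z"
  shows "fps_expansion g 0 = F"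
proof -
  have ev: "eventually (\<lambda>z. g z = f z) (nhds 0)"
    using assms(2,3) eventually_nhds_in_open[of "ball 0 r" 0] by (auto elim!: eventually_mono)
  have "g has_fps_expansion F"
    using has_fps_expansion_cong[OF ev refl] assms(1) by simp
  then show ?thesis by (rule fps_expansion_eqI)
qed

definition "Ef h = fps_expansion (Fh h) 0"
definition "Sfp a = fps_expansion (Sf a) 0"
definition "Yp = fps_expansion yf 0"

lemma Fh_exp: "Fh h has_fps_expansion Ef h"
  unfolding Ef_def by (rule hexp[OF Fh_holo]) auto
lemma Sf_exp: "Sf a has_fps_expansion Sfp a"
  unfolding Sfp_def by (rule hexp[OF Sf_holo]) auto
lemma yf_exp: "yf has_fps_expansion Yp"
  unfolding Yp_def by (rule hexp[OF yf_holo]) auto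

lemma nth0: "f has_fps_expansion F \<Longrightarrow> fps_nth F 0 = f (0::complex)"
  using fps_nth_fps_expansion[of f F 0] by simp

lemma alg1: "y = z * (1 + y^2) \<Longrightarrow> e * (y * u) = z * (e * u + e * (y * (y * u)))"
  for y z e u :: complex by algebra

lemma FPS1:
  assumes "h \<ge> 1"
  shows "Ef h = fps_X * (Ef (h - 1) + Ef (Suc h))"
proof -
  obtain k where k: "h = Suc k" using assms by (cases h) auto
  have "Ef h = fps_expansion (Fh h) 0" by (simp add: Ef_def)
  also have "\<dots> = fps_X * (Ef (h - 1) + Ef (Suc h))"
  proof (rule fps_eq_from[where r = "1/4"])
    show "(\<lambda>z. z * (Fh (h - 1) z + Fh (Suc h) z)) has_fps_expansion fps_X * (Ef (h - 1) + Ef (Suc h))"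
      by (intro has_fps_expansion_mult has_fps_expansion_add Fh_exp has_fps_expansion_fps_X)
    fix z :: complex
    have yz: "yf z = z * (1 + yf z ^ 2)" by (rule yf_eq)
    show "Fh h z = z * (Fh (h - 1) z + Fh (Suc h) z)"
      unfolding Fh_def k diff_Suc_1 power_Suc by (rule alg1[OF yz])
  qed simp
  finally show ?thesis .
qed


lemma alg2: "q * (1 - y - y^3) = 1 \<Longrightarrow> r * (1 - y) = 1 \<Longrightarrow> y = z * (1 + y^2) \<Longrightarrow>
   1 + y^2 * q = 1 + z * ((1 + y^2*q) * y + (1 + y^2*q) * y^2 * r)" for y z q r :: complex
  by algebra

lemma FPS2: "Ef 0 = 1 + fps_X * (Ef 1 + Sfp 2)"
proof -
  have "Ef 0 = fps_expansion (Fh 0) 0" by (simp add: Ef_def)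
  also have "\<dots> = 1 + fps_X * (Ef 1 + Sfp 2)"
  proof (rule fps_eq_from[where r = "1/4"])
    show "(\<lambda>z. 1 + z * (Fh 1 z + Sf 2 z)) has_fps_expansion 1 + fps_X * (Ef 1 + Sfp 2)"
      by (intro has_fps_expansion_mult has_fps_expansion_add Fh_exp Sf_exp has_fps_expansion_fps_X
            has_fps_expansion_1)
    fix z :: complex assume z: "z \<in> ball 0 (1/4)"
    define y where "y = yf z"
    have yz: "y = z * (1 + y ^ 2)" unfolding y_def by (rule yf_eq)
    have ny: "norm y < 1/2" unfolding y_def using norm_yf_B4 z by auto
    have q: "inverse (Qf y) * (1 - y - y^3) = 1" using Qf_nz[OF ny] by (simp add: Qf_def)
    have r: "inverse (1 - y) * (1 - y) = 1" using one_minus_nz[of y] ny by simp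
    show "Fh 0 z = 1 + z * (Fh 1 z + Sf 2 z)"
      unfolding Fh_def Sf_def emf_def y_def[symmetric] using alg2[OF q r yz]
      by (simp add: divide_inverse mult.assoc)
  qed simp
  finally show ?thesis .
qed

lemma Yp_shift: "Yp = fps_X * fps_shift 1 Yp"
proof (rule fps_ext)
  fix n
  have "fps_nth Yp 0 = 0" using nth0[OF yf_exp] by simp
  then show "fps_nth Yp n = fps_nth (fps_X * fps_shift 1 Yp) n" by (cases n) auto
qed

lemma Yp_pow_nth: "fps_nth (Yp ^ Suc n * G) n = 0"
proof -
  have "Yp ^ Suc n = (fps_X * fps_shift 1 Yp) ^ Suc n"
    using Yp_shift by (rule arg_cong)
  then have "Yp ^ Suc n * G = fps_X ^ Suc n * (fps_shift 1 Yp ^ Suc n * G)"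
    by (metis power_mult_distrib mult.assoc)
  then show ?thesis by (simp only: fps_X_power_mult_nth) simp
qed

lemma aux2: "d \<noteq> 0 \<Longrightarrow> e * u / d = e * ((u - v) / d) + v * (e * 1 / (d::complex))"
  by (simp add: field_simps)

lemma FPS3:
  assumes "a \<le> Suc n"
  shows "fps_nth (Sfp a) n = (\<Sum>j=a..n. fps_nth (Ef j) n)"
proof -
  have "Sfp a = fps_expansion (Sf a) 0" by (simp add: Sfp_def)
  also have "\<dots> = (\<Sum>j=a..n. Ef j) + Yp ^ Suc n * Sfp 0"
  proof (rule fps_eq_from[where r = "1/4"])
    show "(\<lambda>z. (\<Sum>j=a..n. Fh j z) + yf z ^ Suc n * Sf 0 z) has_fps_expansion (\<Sum>j=a..n. Ef j) + Yp ^ Suc n * Sfp 0"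
      by (intro has_fps_expansion_mult has_fps_expansion_add Fh_exp Sf_exp has_fps_expansion_sum
            has_fps_expansion_power yf_exp)
    fix z :: complex assume z: "z \<in> ball 0 (1/4)"
    define y where "y = yf z"
    have ny: "norm y < 1/2" unfolding y_def using norm_yf_B4 z by auto
    have nz: "1 - y \<noteq> 0" using one_minus_nz[of y] ny by simp
    have gp: "(\<Sum>j=a..n. y ^ j) = (y ^ a - y ^ Suc n) / (1 - y)"
    proof (cases "a \<le> n")
      case True
      show ?thesis using sum_gp_multiplied[OF True, of y] nz by (simp add: field_simps)
    next
      case False
      then have "a = Suc n" using assms by simp
      then show ?thesis by simp
    qed
    have "(\<Sum>j=a..n. Fh j z) = emf z * (\<Sum>j=a..n. y ^ j)"
      by (simp add: Fh_def y_def sum_distrib_left)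
    also have "\<dots> = emf z * ((y ^ a - y ^ Suc n) / (1 - y))" by (simp add: gp)
    finally have s: "(\<Sum>j=a..n. Fh j z) = emf z * ((y ^ a - y ^ Suc n) / (1 - y))" .
    show "Sf a z = (\<Sum>j=a..n. Fh j z) + yf z ^ Suc n * Sf 0 z"
      unfolding s Sf_def y_def[symmetric] using aux2[OF nz, of "emf z" "y ^ a" "y ^ Suc n"] by simp
  qed simp
  finally have "Sfp a = (\<Sum>j=a..n. Ef j) + Yp ^ Suc n * Sfp 0" .
  then have "fps_nth (Sfp a) n = fps_nth (\<Sum>j=a..n. Ef j) n + fps_nth (Yp ^ Suc n * Sfp 0) n"
    by (simp only: fps_add_nth)
  then show ?thesis unfolding Yp_pow_nth by (simp add: fps_sum_nth)
qed

lemma comb_fps: "of_nat (P n h) = fps_nth (Ef h) n"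
proof (induction n arbitrary: h)
  case 0
  have "fps_nth (Ef h) 0 = Fh h 0" by (rule nth0[OF Fh_exp])
  also have "\<dots> = (if h = 0 then 1 else 0)" by (simp add: Fh_def emf_def Qf_def)
  finally show ?case by (simp add: P_0)
next
  case (Suc n)
  show ?case
  proof (cases "h = 0")
    case True
    have "of_nat (P (Suc n) h) = of_nat (P n 1) + (\<Sum>j=2..n. of_nat (P n j) :: complex)"
      using True by (simp add: P_Suc)
    also have "\<dots> = fps_nth (Ef 1) n + fps_nth (Sfp 2) n"
    proof (cases "n = 0")
      case True
      have "fps_nth (Sfp 2) 0 = 0" by (simp add: nth0[OF Sf_exp] Sf_def)
      then show ?thesis using Suc.IH True by simp
    next
      case False
      then show ?thesis using Suc.IH by (simp add: FPS3)
    qed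
    also have "\<dots> = fps_nth (Ef h) (Suc n)"
      unfolding True FPS2 by simp
    finally show ?thesis .
  next
    case False
    have "of_nat (P (Suc n) h) = of_nat (P n (h - 1)) + (of_nat (P n (Suc h)) :: complex)"
      using False by (simp add: P_Suc)
    also have "\<dots> = fps_nth (Ef h) (Suc n)"
      using False Suc.IH by (subst FPS1[of h]) auto
    finally show ?thesis .
  qed
qed



lemma abs_sums_le:
  fixes f g :: "nat \<Rightarrow> real"
  assumes "f sums a" "g sums b" "\<And>k. \<bar>f k\<bar> \<le> g k"
  shows "\<bar>a\<bar> \<le> b"
proof -
  have le1: "f k \<le> g k" for k using assms(3)[of k] by linarith
  have le2: "- f k \<le> g k" for k using assms(3)[of k] by linarith
  have "a \<le> b" by (rule sums_le[OF le1 assms(1) assms(2)])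
  moreover have "-a \<le> b" by (rule sums_le[OF le2 sums_minus[OF assms(1)] assms(2)])
  ultimately show ?thesis by linarith
qed
lemma nqn:
  fixes q :: real
  assumes "0 \<le> q" "q < 1" "n \<ge> 1"
  shows "q ^ n \<le> 1 / ((1 - q) * n)"
proof -
  have "real n * q ^ n = (\<Sum>k<n. q ^ n)" by simp
  also have "\<dots> \<le> (\<Sum>k<n. q ^ k)"
    using assms by (intro sum_mono power_decreasing) auto
  also have "\<dots> = (1 - q ^ n) / (1 - q)"
    using assms by (subst sum_gp_strict) auto
  also have "\<dots> \<le> 1 / (1 - q)"
    using assms by (intro divide_right_mono) auto
  finally have "real n * q ^ n \<le> 1 / (1 - q)" .
  then show ?thesis using assms by (simp add: field_simps)
qed

lemma asym:
  fixes g :: "complex \<Rightarrow> complex" and u :: "nat \<Rightarrow> real" and \<rho> R :: real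
  assumes \<rho>: "0 < \<rho>" "\<rho> < R" and holo: "g holomorphic_on ball 0 R"
    and coef: "\<And>n. fps_nth (fps_expansion g 0) n = of_real (\<rho> * u n - (if n = 0 then 0 else u (n - 1)))"
  shows "\<exists>K. \<forall>n\<ge>1. \<bar>u n - (Re (g (of_real \<rho>)) / \<rho>) * (1/\<rho>)^n\<bar> \<le> K * ((1/\<rho>)^n / n)"
proof -
  define G where "G = fps_expansion g 0"
  have R: "0 < R" using \<rho> by simp
  have gexp: "g has_fps_expansion G" unfolding G_def by (rule hexp[OF holo R])
  have holo': "g holomorphic_on eball 0 (ereal R)" using holo by simp
  define t where "t = (\<rho> + R) / 2"
  have t: "\<rho> < t" "t < R" using \<rho> by (auto simp: t_def)
  define w where "w n = \<rho> * u n - (if n = 0 then 0 else u (n - 1))" for n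
  have Gw: "fps_nth G n = of_real (w n)" for n unfolding G_def w_def by (rule coef)
  have st: "(\<lambda>n. fps_nth G n * of_real t ^ n) sums g (of_real t)"
    using t \<rho> by (intro has_fps_expansion_imp_sums_complex[OF gexp holo']) auto
  then have "(\<lambda>n. fps_nth G n * of_real t ^ n) \<longlonglongrightarrow> 0"
    by (intro summable_LIMSEQ_zero) (auto simp: sums_iff)
  then have "Bseq (\<lambda>n. fps_nth G n * of_real t ^ n)"
    by (intro convergent_imp_Bseq) (auto simp: convergent_def)
  then obtain B where B: "B > 0" "\<And>n. norm (fps_nth G n * of_real t ^ n) \<le> B"
    by (auto elim!: BseqE)
  have tpos: "t > 0" using t \<rho> by simp
  have wb: "\<bar>w n\<bar> \<le> B / t ^ n" for n
  proof -
    have "norm (fps_nth G n * of_real t ^ n) = \<bar>w n\<bar> * t ^ n"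
      using tpos by (simp add: Gw norm_mult norm_power)
    then show ?thesis using B(2)[of n] tpos by (simp add: field_simps)
  qed
  have sr: "(\<lambda>n. fps_nth G n * of_real \<rho> ^ n) sums g (of_real \<rho>)"
    using t \<rho> by (intro has_fps_expansion_imp_sums_complex[OF gexp holo']) auto
  define S where "S = Re (g (of_real \<rho>))"
  have srr: "(\<lambda>n. w n * \<rho> ^ n) sums S"
    using sums_Re[OF sr] unfolding S_def by (simp add: Gw)
  have tele: "(\<Sum>k<Suc n. w k * \<rho> ^ k) = \<rho> ^ Suc n * u n" for n
    by (induction n) (auto simp: w_def algebra_simps)
  define q where "q = \<rho> / t"
  have q: "0 < q" "q < 1" using \<rho> t tpos by (auto simp: q_def)
  have main: "\<bar>S - \<rho> ^ Suc n * u n\<bar> \<le> B * q ^ Suc n / (1 - q)" for n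
  proof -
    have s1: "(\<lambda>k. w (k + Suc n) * \<rho> ^ (k + Suc n)) sums (S - \<rho> ^ Suc n * u n)"
      using sums_split_initial_segment[OF srr, of "Suc n"] by (simp only: tele)
    have s2: "(\<lambda>k. B * q ^ Suc n * q ^ k) sums (B * q ^ Suc n * (1 / (1 - q)))"
      using q by (intro sums_mult geometric_sums) auto
    have "\<bar>w (k + Suc n) * \<rho> ^ (k + Suc n)\<bar> \<le> B * q ^ Suc n * q ^ k" for k
    proof -
      have "\<bar>w (k + Suc n) * \<rho> ^ (k + Suc n)\<bar> = \<bar>w (k + Suc n)\<bar> * \<rho> ^ (k + Suc n)"
        using \<rho> by (simp add: abs_mult)
      also have "\<dots> \<le> B / t ^ (k + Suc n) * \<rho> ^ (k + Suc n)"
        using \<rho> wb[of "k + Suc n"] by (intro mult_right_mono) auto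
      also have "\<dots> = B * q ^ (k + Suc n)"
        by (simp add: q_def power_divide)
      also have "\<dots> = B * q ^ Suc n * q ^ k" by (simp add: power_add mult_ac)
      finally show ?thesis .
    qed
    from abs_sums_le[OF s1 s2 this] show ?thesis by simp
  qed
  define K where "K = B / ((1 - q) ^ 2 * \<rho>)"
  have "\<bar>u n - (S / \<rho>) * (1/\<rho>)^n\<bar> \<le> K * ((1/\<rho>)^n / n)" if n: "n \<ge> 1" for n
  proof -
    have eq: "u n - (S / \<rho>) * (1/\<rho>)^n = (\<rho> ^ Suc n * u n - S) * ((1/\<rho>) ^ n / \<rho>)"
      using \<rho> by (simp add: field_simps power_divide)
    have pos: "0 \<le> (1/\<rho>) ^ n / \<rho>" using \<rho> by simp
    have "\<bar>u n - (S / \<rho>) * (1/\<rho>)^n\<bar> = \<bar>S - \<rho> ^ Suc n * u n\<bar> * ((1/\<rho>) ^ n / \<rho>)"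
      unfolding eq abs_mult using pos \<rho> by (simp add: abs_minus_commute)
    also have "\<dots> \<le> B * q ^ Suc n / (1 - q) * ((1/\<rho>) ^ n / \<rho>)"
      using main pos by (rule mult_right_mono)
    also have "B * q ^ Suc n / (1 - q) \<le> B * (1 / ((1 - q) * n)) / (1 - q)"
    proof -
      have "q ^ Suc n \<le> q ^ n" using q by (intro power_decreasing) auto
      also have "\<dots> \<le> 1 / ((1 - q) * n)" using q n by (intro nqn) auto
      finally show ?thesis using q B by (intro divide_right_mono mult_left_mono) auto
    qed
    then have "B * q ^ Suc n / (1 - q) * ((1/\<rho>) ^ n / \<rho>) \<le> B * (1 / ((1 - q) * n)) / (1 - q) * ((1/\<rho>) ^ n / \<rho>)"
      using pos by (rule mult_right_mono)
    also have "\<dots> = K * ((1/\<rho>)^n / n)"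
      using q \<rho> n by (simp add: K_def field_simps power2_eq_square)
    finally show ?thesis .
  qed
  then show ?thesis unfolding S_def by blast
qed


lemma quad_nz:
  fixes w :: complex and \<alpha> :: real
  assumes "norm w < 1"
  shows "w^2 + of_real \<alpha> * w + of_real (1 + \<alpha>^2) \<noteq> 0"
proof
  assume h: "w^2 + of_real \<alpha> * w + of_real (1 + \<alpha>^2) = 0"
  define x where "x = Re w"
  define y where "y = Im w"
  have re: "x*x - y*y + \<alpha>*x + 1 + \<alpha>^2 = 0"
    using arg_cong[OF h, of Re] by (simp add: power2_eq_square x_def y_def)
  have im: "y * (2*x + \<alpha>) = 0"
    using arg_cong[OF h, of Im] by (simp add: power2_eq_square x_def y_def algebra_simps)
  have nw: "x*x + y*y < 1"
  proof -
    have "norm w ^ 2 < 1" using assms by (simp add: power_less_one_iff)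
    moreover have "norm w ^ 2 = x*x + y*y" using cmod_power2[of w] by (simp add: x_def y_def power2_eq_square)
    ultimately show ?thesis by simp
  qed
  show False
  proof (cases "y = 0")
    case True
    have "(x + \<alpha>/2)^2 \<ge> 0" by simp
    moreover have "(x + \<alpha>/2)^2 = x*x + \<alpha>*x + \<alpha>^2/4" by (simp add: power2_eq_square algebra_simps)
    moreover have "\<alpha>^2 \<ge> 0" by simp
    moreover have "x*x + \<alpha>*x + 1 + \<alpha>^2 = 0" using re True by simp
    moreover have "12/100 * (1 + 3*\<alpha>^2) = 12/100 + 36/100*\<alpha>^2" by algebra
    ultimately show False by linarith
  next
    case False
    then have "2*x + \<alpha> = 0" using im by simp
    then have xa: "x = -\<alpha>/2" by simp
    have "x*x + y*y = 1 + \<alpha>^2"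
      using re unfolding xa by (simp add: power2_eq_square algebra_simps)
    moreover have "\<alpha>^2 \<ge> 0" by simp
    ultimately show False using nw by simp
  qed
qed

definition Kf :: "real \<Rightarrow> complex \<Rightarrow> complex" where
  "Kf \<alpha> w = (1 - of_real \<alpha> * w) / ((1 + of_real \<alpha>^2) * (1 + of_real \<alpha>^2 + of_real \<alpha> * w + w^2))"
definition gem :: "real \<Rightarrow> complex \<Rightarrow> complex" where
  "gem \<alpha> z = yf z ^ 2 * Kf \<alpha> (yf z) / (1 + yf z ^ 2)"
definition gmm :: "real \<Rightarrow> complex \<Rightarrow> complex" where
  "gmm \<alpha> z = Kf \<alpha> (yf z)"

lemma den_nz:
  assumes "norm w < 1"
  shows "(1 + of_real \<alpha>^2) * (1 + of_real \<alpha>^2 + of_real \<alpha> * w + w^2) \<noteq> (0::complex)"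
proof -
  have "1 + (of_real \<alpha>)^2 = (of_real (1 + \<alpha>^2) :: complex)" by simp
  moreover have "(of_real (1 + \<alpha>^2) :: complex) \<noteq> 0"
    by (metis of_real_eq_0_iff add_pos_nonneg zero_less_one zero_le_power2 less_irrefl)
  moreover have "1 + of_real \<alpha>^2 + of_real \<alpha> * w + w^2 = w^2 + of_real \<alpha> * w + of_real (1 + \<alpha>^2)"
    by (simp add: algebra_simps)
  ultimately have c1: "1 + (of_real \<alpha>)^2 \<noteq> (0::complex)"
    and c2: "1 + of_real \<alpha>^2 + of_real \<alpha> * w + w^2 \<noteq> 0"
    using quad_nz[OF assms, of \<alpha>] by metis+
  show ?thesis using c1 c2 by simp
qed

lemma norm_yf_half: "z \<in> ball 0 (1/2) \<Longrightarrow> norm (yf z) < 1"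
  using norm_yf[of z] by auto

lemma Kf_holo: "Kf \<alpha> \<circ> yf holomorphic_on ball 0 (1/2)"
proof -
  have "(\<lambda>z. (1 - of_real \<alpha> * yf z) / ((1 + of_real \<alpha>^2) * (1 + of_real \<alpha>^2 + of_real \<alpha> * yf z + yf z^2))) holomorphic_on ball 0 (1/2)"
    by (intro holomorphic_on_divide holomorphic_on_diff holomorphic_on_add holomorphic_on_mult
         holomorphic_on_power holomorphic_on_const yf_holo)
       (use den_nz norm_yf_half in blast)
  then show ?thesis by (simp add: o_def Kf_def)
qed

lemma gmm_holo: "gmm \<alpha> holomorphic_on ball 0 (1/2)"
  using Kf_holo[of \<alpha>] by (simp add: gmm_def[abs_def] o_def)

lemma gem_holo: "gem \<alpha> holomorphic_on ball 0 (1/2)"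
proof -
  have "(\<lambda>z. yf z ^ 2 * (Kf \<alpha> \<circ> yf) z / (1 + yf z ^ 2)) holomorphic_on ball 0 (1/2)"
    by (intro holomorphic_on_divide holomorphic_on_add holomorphic_on_mult holomorphic_on_power
          holomorphic_on_const yf_holo Kf_holo)
       (use one_plus_sq_nz norm_yf_half in blast)
  then show ?thesis by (simp add: gem_def[abs_def] o_def)
qed

lemma h1: "p * (1 + y^2) = 1 \<Longrightarrow> z = y * p \<Longrightarrow> a^3 + a = 1 \<Longrightarrow> a^2 - z = a*(a-y)*(1-a*y)*p" for a y z p :: complex
  by algebra
lemma h2: "a^3 + a = 1 \<Longrightarrow> 1 - y - y^3 = (a - y)*(1+a^2+a*y+y^2)" for a y :: complex
  by algebra
lemma h3: "q * ((a - y) * ss) = 1 \<Longrightarrow> k * ((1 + a^2) * ss) = 1 \<Longrightarrow> a^3 + a = 1 \<Longrightarrow> a*(a-y)*q = k" for a y q k ss :: complex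
  by algebra
lemma G1: "a^2 - z = a*(a-y)*(1-a*y)*p \<Longrightarrow> a*(a-y)*q = k \<Longrightarrow> (a^2-z)*(y^2*q) = y^2*((1-a*y)*k)*p" for a y z p q k :: complex
  by algebra
lemma E4: "q * (1 - y - y^3) = 1 \<Longrightarrow> r * (1 - y) = 1 \<Longrightarrow> (1 + y^2 * q) * r = (1 + y^2) * q" for y q r :: complex
  by algebra
lemma G2: "a^2 - z = a*(a-y)*(1-a*y)*p \<Longrightarrow> a*(a-y)*q = k \<Longrightarrow> (1 + y^2 * q) * r = (1 + y^2) * q \<Longrightarrow> p * (1 + y^2) = 1 \<Longrightarrow> (a^2-z)*((1 + y^2*q)*r) = (1-a*y)*k" for a y z p q k r :: complex
  by algebra
lemma zp: "y = z * (1 + y^2) \<Longrightarrow> p * (1 + y^2) = 1 \<Longrightarrow> z = y * p" for y z p :: complex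
  by algebra

lemma key_ids:
  fixes \<alpha> :: real
  assumes a3: "\<alpha>^3 + \<alpha> = 1" and z: "z \<in> B4"
  shows "(of_real \<alpha>^2 - z) * (emf z - 1) = gem \<alpha> z"
    and "(of_real \<alpha>^2 - z) * Sf 0 z = gmm \<alpha> z"
proof -
  define a :: complex where "a = of_real \<alpha>"
  have a3': "a^3 + a = 1" unfolding a_def using arg_cong[OF a3, of "of_real :: real \<Rightarrow> complex"] by simp
  define y where "y = yf z"
  have yz: "y = z * (1 + y ^ 2)" unfolding y_def by (rule yf_eq)
  have ny: "norm y < 1/2" unfolding y_def using norm_yf_B4 z by auto
  define q where "q = inverse (Qf y)"
  define r where "r = inverse (1 - y)"
  define p where "p = inverse (1 + y^2)"
  define s where "s = 1 + a^2 + a*y + y^2"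
  define k where "k = inverse ((1 + a^2) * s)"
  have q: "q * (1 - y - y^3) = 1" using Qf_nz[OF ny] by (simp add: Qf_def q_def)
  have r: "r * (1 - y) = 1" using one_minus_nz[of y] ny by (simp add: r_def)
  have p: "p * (1 + y^2) = 1" using one_plus_sq_nz[of y] ny by (simp add: p_def)
  have k: "k * ((1 + a^2) * s) = 1"
    unfolding k_def s_def a_def by (rule left_inverse) (use den_nz[of y \<alpha>] ny in simp)
  have zyp: "z = y * p" by (rule zp[OF yz p])
  have e1: "a^2 - z = a*(a-y)*(1-a*y)*p" by (rule h1[OF p zyp a3'])
  have q2: "q * ((a - y) * s) = 1" using q h2[OF a3', of y] by (simp add: s_def)
  have e3: "a*(a-y)*q = k" by (rule h3[OF q2 k a3'])
  have Kv: "Kf \<alpha> y = (1 - a*y) * k" by (simp add: Kf_def a_def k_def s_def divide_inverse)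
  show "(of_real \<alpha>^2 - z) * (emf z - 1) = gem \<alpha> z"
    using G1[OF e1 e3] unfolding gem_def emf_def y_def[symmetric] a_def[symmetric] Kv
    by (simp add: divide_inverse q_def p_def)
  show "(of_real \<alpha>^2 - z) * Sf 0 z = gmm \<alpha> z"
    using G2[OF e1 e3 E4[OF q r] p] unfolding gmm_def Sf_def emf_def y_def[symmetric] a_def[symmetric] Kv
    by (simp add: divide_inverse q_def r_def)
qed


lemma coef_lin: fixes c :: complex and F :: "complex fps" shows "fps_nth ((fps_const c - fps_X) * F) n = c * fps_nth F n - (if n = 0 then 0 else fps_nth F (n - 1))"
proof -
  have "(fps_const c - fps_X) * F = fps_const c * F - fps_X * F" by (simp add: left_diff_distrib)
  then show ?thesis by (simp only: fps_sub_nth fps_mult_left_const_nth fps_X_mult_nth)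
qed

lemma gem_fps:
  assumes "\<alpha>^3 + \<alpha> = 1"
  shows "fps_expansion (gem \<alpha>) 0 = (fps_const (of_real \<alpha>^2) - fps_X) * (Ef 0 - 1)"
proof (rule fps_eq_from[where r = "1/4"])
  show "(\<lambda>z. (of_real \<alpha>^2 - z) * (Fh 0 z - 1)) has_fps_expansion (fps_const (of_real \<alpha>^2) - fps_X) * (Ef 0 - 1)"
    by (intro has_fps_expansion_mult has_fps_expansion_diff has_fps_expansion_const has_fps_expansion_fps_X
          Fh_exp has_fps_expansion_1)
  fix z :: complex assume "z \<in> ball 0 (1/4)"
  then show "gem \<alpha> z = (of_real \<alpha>^2 - z) * (Fh 0 z - 1)"
    using key_ids(1)[OF assms, of z] by (simp add: Fh_def)
qed simp

lemma gmm_fps: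
  assumes "\<alpha>^3 + \<alpha> = 1"
  shows "fps_expansion (gmm \<alpha>) 0 = (fps_const (of_real \<alpha>^2) - fps_X) * Sfp 0"
proof (rule fps_eq_from[where r = "1/4"])
  show "(\<lambda>z. (of_real \<alpha>^2 - z) * Sf 0 z) has_fps_expansion (fps_const (of_real \<alpha>^2) - fps_X) * Sfp 0"
    by (intro has_fps_expansion_mult has_fps_expansion_diff has_fps_expansion_const has_fps_expansion_fps_X
          Sf_exp)
  fix z :: complex assume "z \<in> ball 0 (1/4)"
  then show "gmm \<alpha> z = (of_real \<alpha>^2 - z) * Sf 0 z"
    using key_ids(2)[OF assms, of z] by simp
qed simp

lemma Ef0_nth: "fps_nth (Ef 0) n = of_nat (e_num n)"
  using comb_fps[of n 0] by (simp add: e_num_P)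

lemma Sfp0_nth: "fps_nth (Sfp 0) n = of_nat (m_num n)"
proof -
  have "fps_nth (Sfp 0) n = (\<Sum>j=0..n. fps_nth (Ef j) n)" by (rule FPS3) simp
  also have "\<dots> = (\<Sum>j=0..n. of_nat (P n j))" by (simp add: comb_fps)
  also have "\<dots> = of_nat (m_num n)" by (simp add: m_num_P atLeast0AtMost)
  finally show ?thesis .
qed

lemma yf_rho:
  assumes a3: "\<alpha>^3 + \<alpha> = 1" and ah: "1/2 \<le> \<alpha>"
  shows "yf (of_real (\<alpha>^2)) = of_real \<alpha>"
proof -
  have r1: "1 - 4*(\<alpha>^2)^2 = (2*\<alpha>-1)^2" using a3 by algebra
  have "(of_real (1 - 4*(\<alpha>^2)^2) :: complex) = of_real ((2*\<alpha>-1)^2)" using r1 by (rule arg_cong)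
  moreover have "(of_real (1 - 4*(\<alpha>^2)^2) :: complex) = 1 - 4 * (of_real (\<alpha>^2))^2" by simp
  ultimately have e1: "1 - 4 * (of_real (\<alpha>^2) :: complex)^2 = of_real ((2*\<alpha>-1)^2)" by simp
  have e2: "csqrt (of_real ((2*\<alpha> - 1)^2)) = of_real (2*\<alpha> - 1)"
    using ah by (subst csqrt_of_real) auto
  have "yf (of_real (\<alpha>^2)) = 2 * of_real (\<alpha>^2) / (1 + of_real (2*\<alpha> - 1))"
    unfolding yf_def e1 e2 ..
  also have "\<dots> = of_real (2 * \<alpha>^2 / (1 + (2 * \<alpha> - 1)))" by simp
  also have "2 * \<alpha>^2 / (1 + (2 * \<alpha> - 1)) = \<alpha>" using ah by (simp add: power2_eq_square)
  finally show ?thesis .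
qed

definition Kr :: "real \<Rightarrow> real" where
  "Kr \<alpha> = (1 - \<alpha> * \<alpha>) / ((1 + \<alpha>^2) * (1 + \<alpha>^2 + \<alpha> * \<alpha> + \<alpha>^2))"

lemma Kf_real: "Kf \<alpha> (of_real \<alpha>) = of_real (Kr \<alpha>)"
  unfolding Kf_def Kr_def by (simp only: of_real_divide of_real_mult of_real_add of_real_1 of_real_diff of_real_power)

lemma gem_rho: "\<alpha>^3 + \<alpha> = 1 \<Longrightarrow> 1/2 \<le> \<alpha> \<Longrightarrow> gem \<alpha> (of_real (\<alpha>^2)) = of_real (\<alpha>^2 * Kr \<alpha> / (1 + \<alpha>^2))"
  by (unfold gem_def yf_rho Kf_real) (simp only: of_real_divide of_real_mult of_real_add of_real_1 of_real_diff of_real_power)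

lemma gmm_rho: "\<alpha>^3 + \<alpha> = 1 \<Longrightarrow> 1/2 \<le> \<alpha> \<Longrightarrow> gmm \<alpha> (of_real (\<alpha>^2)) = of_real (Kr \<alpha>)"
  by (unfold gmm_def yf_rho Kf_real) (rule refl)


lemma cubic_m_unique:
  fixes x c :: real
  assumes "31 * x ^ 3 - 31 * x ^ 2 + 16 * x - 3 = 0" "31 * c ^ 3 - 31 * c ^ 2 + 16 * c - 3 = 0"
  shows "x = c"
proof -
  define Q where "Q = 31*(x^2+x*c+c^2) - 31*(x+c) + 16"
  have "4 * Q = 93*(x+c-2/3)^2 + 31*(x-c)^2 + 68/3" unfolding Q_def by algebra
  moreover have "(x+c-2/3)^2 \<ge> 0" "(x-c)^2 \<ge> 0" by simp_all
  ultimately have Qp: "Q > 0" by linarith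
  have "(x - c) * Q = 0" using assms unfolding Q_def by algebra
  with Qp show ?thesis by simp
qed

lemma cubic_e_unique:
  fixes x c :: real
  assumes "31 * x ^ 3 - 62 * x ^ 2 + 35 * x - 3 = 0" "31 * c ^ 3 - 62 * c ^ 2 + 35 * c - 3 = 0"
    and "0 \<le> c" "c \<le> 12/100"
  shows "x = c"
proof -
  define Q where "Q = 31*x^2 + (31*c - 62)*x + 31*c^2 - 62*c + 35"
  have "124 * Q = (62*x + 31*c - 62)^2 + (2883*c^2 - 3844*c + 496)" unfolding Q_def by algebra
  moreover have "(62*x + 31*c - 62)^2 \<ge> 0" by simp
  moreover have "c^2 \<ge> 0" by simp
  ultimately have Qp: "Q > 0" using assms(3,4) by linarith
  have "(x - c) * Q = 0" using assms(1,2) unfolding Q_def by algebra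
  with Qp show ?thesis by simp
qed

lemma ce_rel: "c * ((1 + a^2) * (1 + a^2) * (1 + 3*a^2)) = 1 - a^2 \<Longrightarrow> a^3 + a = 1 \<Longrightarrow> c * (1 + 3*a^2) = a^2*(1-a^2)" for a c :: real
  by algebra
lemma ce_cub: "c * (1 + 3*a^2) = a^2*(1-a^2) \<Longrightarrow> a^3 + a = 1 \<Longrightarrow> 31 * c ^ 3 - 62 * c ^ 2 + 35 * c - 3 = 0" for a c :: real
  by algebra
lemma cm_cub: "c * (a^2 * (1 + a^2) * (1 + 3*a^2)) = 1 - a^2 \<Longrightarrow> a^3 + a = 1 \<Longrightarrow> 31 * c ^ 3 - 31 * c ^ 2 + 16 * c - 3 = 0" for a c :: real
  by algebra
lemma a3_from: "a^2 = r \<Longrightarrow> r ^ 3 + 2 * r ^ 2 + r - 1 = 0 \<Longrightarrow> (a^3 + a - 1) * (a^3 + a + 1) = 0" for a r :: real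
proof -
  assume h: "a^2 = r" "r ^ 3 + 2 * r ^ 2 + r - 1 = 0"
  have "(a^3 + a - 1) * (a^3 + a + 1) = (a^2)^3 + 2*(a^2)^2 + a^2 - 1" by algebra
  then show ?thesis using h by simp
qed

theorem corollary4p7:
  fixes \<rho>0 Ce Cm :: real
  assumes "\<rho>0 > 0" and "\<rho>0 ^ 3 + 2 * \<rho>0 ^ 2 + \<rho>0 - 1 = 0"
    and "Ce > 0" and "31 * Ce ^ 3 - 62 * Ce ^ 2 + 35 * Ce - 3 = 0"
    and "Cm > 0" and "31 * Cm ^ 3 - 31 * Cm ^ 2 + 16 * Cm - 3 = 0"
  shows "(\<lambda>n. real (e_num n) - Ce * (1 / \<rho>0) ^ n) \<in> O(\<lambda>n. (1 / \<rho>0) ^ n / real n) \<and>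
         (\<lambda>n. real (m_num n) - Cm * (1 / \<rho>0) ^ n) \<in> O(\<lambda>n. (1 / \<rho>0) ^ n / real n)"
proof -
  define \<alpha> where "\<alpha> = sqrt \<rho>0"
  have apos: "\<alpha> > 0" using assms(1) by (simp add: \<alpha>_def)
  have a2: "\<alpha>^2 = \<rho>0" using assms(1) by (simp add: \<alpha>_def)
  have "(\<alpha>^3 + \<alpha> - 1) * (\<alpha>^3 + \<alpha> + 1) = 0" by (rule a3_from[OF a2 assms(2)])
  moreover have "\<alpha>^3 + \<alpha> + 1 > 0"
  proof -
    have "\<alpha>^3 > 0" using apos by simp
    then show ?thesis using apos by linarith
  qed
  ultimately have a3: "\<alpha>^3 + \<alpha> = 1" by simp
  have ah: "1/2 \<le> \<alpha>"
  proof (rule ccontr)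
    assume "\<not> 1/2 \<le> \<alpha>"
    then have "\<alpha> < 1/2" by simp
    then have "\<alpha>^3 \<le> (1/2)^3" using apos by (intro power_mono) auto
    then show False using a3 \<open>\<alpha> < 1/2\<close> by (simp add: power3_eq_cube)
  qed
  have rho_half: "\<rho>0 < 1/2"
  proof (rule ccontr)
    assume h: "\<not> \<rho>0 < 1/2"
    have a7: "\<alpha> \<ge> 7/10"
    proof (rule ccontr)
      assume "\<not> \<alpha> \<ge> 7/10"
      then have "\<alpha>^2 < (7/10)^2" using apos by (intro power_strict_mono) auto
      then show False using h a2 by (simp add: power2_eq_square)
    qed
    have "\<alpha>^3 = \<alpha> * \<rho>0" using a2 by (simp add: power2_eq_square power3_eq_cube)
    also have "\<dots> \<ge> 7/10 * (1/2)" using a7 h by (intro mult_mono) auto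
    finally show False using a3 a7 by simp
  qed
  have rpos: "0 < \<alpha>^2" using apos by simp
  have rlt: "\<alpha>^2 < 1/2" using rho_half a2 by simp
  have one_over: "(1 / \<rho>0) ^ n = (1 / \<alpha>^2) ^ n" for n using a2 by simp
  define ue where "ue n = real (e_num n) - (if n = 0 then 1 else 0)" for n
  have coefe: "fps_nth (fps_expansion (gem \<alpha>) 0) n = of_real (\<alpha>^2 * ue n - (if n = 0 then 0 else ue (n - 1)))" for n
    unfolding gem_fps[OF a3] coef_lin ue_def by (simp add: Ef0_nth)
  obtain Ke where Ke: "\<forall>n\<ge>1. \<bar>ue n - (Re (gem \<alpha> (of_real (\<alpha>^2))) / \<alpha>^2) * (1/\<alpha>^2)^n\<bar> \<le> Ke * ((1/\<alpha>^2)^n / n)"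
    using asym[OF rpos rlt gem_holo coefe] by auto
  define b where "b = \<alpha>^2"
  have bpos: "b > 0" using rpos by (simp add: b_def)
  have nz1: "1 + b \<noteq> 0" "1 + 3*b \<noteq> 0" "b \<noteq> 0" using bpos by auto
  have t1: "1 + \<alpha>^2 + \<alpha>*\<alpha> + \<alpha>^2 = 1 + 3*b" by (simp add: b_def power2_eq_square)
  have t2: "1 - \<alpha>*\<alpha> = 1 - b" by (simp add: b_def power2_eq_square)
  have Krb: "Kr \<alpha> = (1-b)/((1+b)*(1+3*b))" unfolding Kr_def t1 t2 b_def ..
  define c0 where "c0 = (1-b)/((1+b)*(1+b)*(1+3*b))"
  have c0v: "Re (gem \<alpha> (of_real (\<alpha>^2))) / \<alpha>^2 = c0"
  proof -
    have "Re (gem \<alpha> (of_real (\<alpha>^2))) / \<alpha>^2 = b * ((1-b)/((1+b)*(1+3*b))) / (1+b) / b"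
      unfolding gem_rho[OF a3 ah] Re_complex_of_real Krb b_def ..
    also have "\<dots> = ((1-b)/((1+b)*(1+3*b))) / (1+b)" using nz1 by simp
    also have "\<dots> = c0" unfolding c0_def by (simp add: divide_divide_eq_left mult_ac)
    finally show ?thesis .
  qed
  have c0r: "c0 * ((1 + \<alpha>^2) * (1 + \<alpha>^2) * (1 + 3*\<alpha>^2)) = 1 - \<alpha>^2"
    unfolding c0_def b_def[symmetric] using nz1 by simp
  have c0r2: "c0 * (1 + 3*\<alpha>^2) = \<alpha>^2*(1-\<alpha>^2)" by (rule ce_rel[OF c0r a3])
  have c0nn: "0 \<le> c0"
  proof -
    have "0 \<le> \<alpha>^2*(1-\<alpha>^2)" using rlt by simp
    then have "0 \<le> c0 * (1 + 3*\<alpha>^2)" using c0r2 by simp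
    moreover have "1 + 3*\<alpha>^2 > 0" by (simp add: add_pos_nonneg)
    ultimately show ?thesis by (simp add: zero_le_mult_iff)
  qed
  have c0le: "c0 \<le> 12/100"
  proof (rule ccontr)
    assume "\<not> c0 \<le> 12/100"
    then have "12/100 * (1 + 3*\<alpha>^2) < c0 * (1 + 3*\<alpha>^2)"
      by (intro mult_strict_right_mono) (auto simp: add_pos_nonneg)
    also have "\<dots> = \<alpha>^2*(1-\<alpha>^2)" by (rule c0r2)
    finally have "12/100 * (1 + 3*\<alpha>^2) < \<alpha>^2*(1-\<alpha>^2)" .
    moreover have "(\<alpha>^2 - 32/100)^2 \<ge> 0" by simp
    moreover have "(\<alpha>^2 - 32/100)^2 = \<alpha>^2*\<alpha>^2 - 64/100*\<alpha>^2 + 1024/10000" by algebra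
    moreover have "\<alpha>^2*(1-\<alpha>^2) = \<alpha>^2 - \<alpha>^2*\<alpha>^2" by algebra
    moreover have "12/100 * (1 + 3*\<alpha>^2) = 12/100 + 36/100*\<alpha>^2" by algebra
    ultimately show False by linarith
  qed
  have Ce_eq: "Ce = c0"
    by (rule cubic_e_unique[OF assms(4) ce_cub[OF c0r2 a3] c0nn c0le])
  define um where "um n = real (m_num n)" for n
  have coefm: "fps_nth (fps_expansion (gmm \<alpha>) 0) n = of_real (\<alpha>^2 * um n - (if n = 0 then 0 else um (n - 1)))" for n
    unfolding gmm_fps[OF a3] coef_lin um_def by (simp add: Sfp0_nth)
  obtain Km where Km: "\<forall>n\<ge>1. \<bar>um n - (Re (gmm \<alpha> (of_real (\<alpha>^2))) / \<alpha>^2) * (1/\<alpha>^2)^n\<bar> \<le> Km * ((1/\<alpha>^2)^n / n)"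
    using asym[OF rpos rlt gmm_holo coefm] by auto
  define c1 where "c1 = (1-b)/((1+b)*(1+3*b)*b)"
  have c1v: "Re (gmm \<alpha> (of_real (\<alpha>^2))) / \<alpha>^2 = c1"
  proof -
    have "Re (gmm \<alpha> (of_real (\<alpha>^2))) / \<alpha>^2 = ((1-b)/((1+b)*(1+3*b))) / b"
      unfolding gmm_rho[OF a3 ah] Re_complex_of_real Krb b_def ..
    also have "\<dots> = c1" unfolding c1_def by (simp add: divide_divide_eq_left mult_ac)
    finally show ?thesis .
  qed
  have c1r: "c1 * (\<alpha>^2 * (1 + \<alpha>^2) * (1 + 3*\<alpha>^2)) = 1 - \<alpha>^2"
  proof -
    have "c1 * (b * (1 + b) * (1 + 3*b)) = (1-b)/((1+b)*(1+3*b)*b) * ((1+b)*(1+3*b)*b)"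
      by (simp add: c1_def mult_ac)
    also have "\<dots> = 1 - b" using nz1 by simp
    finally have "c1 * (b * (1 + b) * (1 + 3*b)) = 1 - b" .
    then show ?thesis by (simp add: b_def)
  qed
  have Cm_eq: "Cm = c1"
    by (rule cubic_m_unique[OF assms(6) cm_cub[OF c1r a3]])
  have gpos: "norm ((1 / \<rho>0) ^ n / real n) = (1/\<alpha>^2)^n / n" for n
  proof -
    have "(1 / \<rho>0) ^ n \<ge> 0" using assms(1) by simp
    then show ?thesis using a2 by (simp add: abs_of_nonneg)
  qed
  show ?thesis
  proof
    show "(\<lambda>n. real (e_num n) - Ce * (1 / \<rho>0) ^ n) \<in> O(\<lambda>n. (1 / \<rho>0) ^ n / real n)"
    proof (rule bigoI[where c = Ke])
      show "eventually (\<lambda>n. norm (real (e_num n) - Ce * (1 / \<rho>0) ^ n) \<le> Ke * norm ((1 / \<rho>0) ^ n / real n)) at_top"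
        unfolding eventually_at_top_linorder
      proof (intro exI[of _ 1] allI impI)
        fix n :: nat assume n: "n \<ge> 1"
        then have "ue n = real (e_num n)" by (simp add: ue_def)
        then show "norm (real (e_num n) - Ce * (1 / \<rho>0) ^ n) \<le> Ke * norm ((1 / \<rho>0) ^ n / real n)"
          using Ke n unfolding gpos one_over c0v Ce_eq by auto
      qed
    qed
    show "(\<lambda>n. real (m_num n) - Cm * (1 / \<rho>0) ^ n) \<in> O(\<lambda>n. (1 / \<rho>0) ^ n / real n)"
    proof (rule bigoI[where c = Km])
      show "eventually (\<lambda>n. norm (real (m_num n) - Cm * (1 / \<rho>0) ^ n) \<le> Km * norm ((1 / \<rho>0) ^ n / real n)) at_top"
        unfolding eventually_at_top_linorder
      proof (intro exI[of _ 1] allI impI)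
        fix n :: nat assume n: "n \<ge> 1"
        show "norm (real (m_num n) - Cm * (1 / \<rho>0) ^ n) \<le> Km * norm ((1 / \<rho>0) ^ n / real n)"
          using Km n unfolding gpos one_over c1v Cm_eq um_def by auto
      qed
    qed
  qed
qed


end
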